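(* Let $\mathbb{T}$ be a split torus over $k$ with character lattice $M$ and cocharacter lattice $N$, let $p\in N$ be a primitive vector and $e\in M$. Let $\partial_{p,e}$ be the $k$-derivation of $k[M]$ (extended to $K_{\mathbb{T}}=\mathrm{Frac}(k[M])$) given by $\chi^m\mapsto p(m)\chi^{m+e}$. Then $\partial_{p,e}$ is rationally integrable if and only if $p(e)=\pm1$.
   Context: $k$ is a field of characteristic zero, $\mathbb{T}=\mathbb{G}_{m,k}^n$, $M=\mathrm{Hom}(\mathbb{T},\mathbb{G}_{m,k})$, $N=\mathrm{Hom}(\mathbb{G}_{m,k},\mathbb{T})$ with the natural pairing $p(m)\in\mathbb{Z}$; $k[M]=\bigoplus_{m\in M}k\chi^m$. A $k$-derivation $\partial$ of a field $K$ is rationally integrable if for every $f\in K$ the series $\sum_{n\ge0}\frac{\partial^n(f)}{n!}t^n\in K[[t]]$ lies in $K(t)\cap K[[t]]$. *)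

theory Defs
  imports "HOL-Library.Poly_Mapping" "HOL-Computational_Algebra.Fraction_Field"
    "HOL-Computational_Algebra.Polynomial_FPS"
begin

(* Lattices: M = N = ('n \<Rightarrow>\<^sub>0 int), a free Z-module of rank CARD('n).
  The linorder on 'n only serves to obtain the idom instance of k[M].
  k[M] = (M \<Rightarrow>\<^sub>0 'k), the group algebra; chi^m = single m 1.*)

definition pairing :: "('n::finite \<Rightarrow>\<^sub>0 int) \<Rightarrow> ('n \<Rightarrow>\<^sub>0 int) \<Rightarrow> int" where
  "pairing p m = (\<Sum>i\<in>UNIV. Poly_Mapping.lookup p i * Poly_Mapping.lookup m i)"

definition primitive_vec :: "('n::finite \<Rightarrow>\<^sub>0 int) \<Rightarrow> bool" where
  "primitive_vec p \<longleftrightarrow> p \<noteq> 0 \<and> (\<forall>d::int. (\<forall>i. d dvd Poly_Mapping.lookup p i) \<longrightarrow> is_unit d)"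

definition chi :: "('n \<Rightarrow>\<^sub>0 int) \<Rightarrow> (('n \<Rightarrow>\<^sub>0 int) \<Rightarrow>\<^sub>0 'k::zero_neq_one)" where
  "chi m = Poly_Mapping.single m 1"

definition der_poly :: "('n::finite \<Rightarrow>\<^sub>0 int) \<Rightarrow> ('n \<Rightarrow>\<^sub>0 int)
    \<Rightarrow> (('n \<Rightarrow>\<^sub>0 int) \<Rightarrow>\<^sub>0 'k::comm_ring_1) \<Rightarrow> (('n \<Rightarrow>\<^sub>0 int) \<Rightarrow>\<^sub>0 'k)" where
  "der_poly p e f = (\<Sum>m\<in>Poly_Mapping.keys f. Poly_Mapping.single (m + e) (Poly_Mapping.lookup f m * of_int (pairing p m)))"

definition der_frac :: "('n::{finite,linorder} \<Rightarrow>\<^sub>0 int) \<Rightarrow> ('n \<Rightarrow>\<^sub>0 int)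
    \<Rightarrow> (('n \<Rightarrow>\<^sub>0 int) \<Rightarrow>\<^sub>0 'k::field) fract \<Rightarrow> (('n \<Rightarrow>\<^sub>0 int) \<Rightarrow>\<^sub>0 'k) fract" where
  "der_frac p e x = (SOME y. \<exists>a b. b \<noteq> 0 \<and> x = Fraction_Field.Fract a b \<and>
      y = Fraction_Field.Fract (der_poly p e a * b - a * der_poly p e b) (b * b))"

(* Rational integrability: the exponential series lies in K(t) \<inter> K[[t]], i.e. there are
  polynomials P, Q with Q \<noteq> 0 and Q * series = P in K[[t]].*)
definition rationally_integrable :: "('K::field \<Rightarrow> 'K) \<Rightarrow> bool" where
  "rationally_integrable D \<longleftrightarrow> (\<forall>f. \<exists>P Q :: 'K poly. Q \<noteq> 0 \<and>
      fps_of_poly Q * Abs_fps (\<lambda>n. (D ^^ n) f / of_nat (fact n)) = fps_of_poly P)"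

end

theory Submission
  imports Defs
begin

unbundle fps_syntax


lemma pairing_add: "pairing p (m + n) = pairing p m + pairing p n"
  by (simp add: pairing_def lookup_add distrib_left sum.distrib)

lemma pairing_zero[simp]: "pairing p 0 = 0"
  by (simp add: pairing_def)

lemma der_poly_lookup:
  "Poly_Mapping.lookup (der_poly p e f) k = Poly_Mapping.lookup f (k - e) * of_int (pairing p (k - e))"
proof -
  have "Poly_Mapping.lookup (der_poly p e f) k =
     (\<Sum>m\<in>Poly_Mapping.keys f. if m = k - e then Poly_Mapping.lookup f m * of_int (pairing p m) else 0)"
    unfolding der_poly_def lookup_sum lookup_single when_def
    by (intro sum.cong refl) (auto simp: eq_diff_eq)
  also have "\<dots> = Poly_Mapping.lookup f (k - e) * of_int (pairing p (k - e))"
    by (simp add: in_keys_iff)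
  finally show ?thesis .
qed

lemma single_eq_0_iff: "Poly_Mapping.single k v = 0 \<longleftrightarrow> v = 0"
  by (metis lookup_single_eq lookup_zero single_zero)

lemma der_poly_add: "der_poly p e (f + g) = der_poly p e f + der_poly p e g"
  by (rule poly_mapping_eqI) (simp add: der_poly_lookup lookup_add distrib_right)

lemma der_poly_zero[simp]: "der_poly p e 0 = 0"
  by (rule poly_mapping_eqI) (simp add: der_poly_lookup)

lemma der_poly_uminus: "der_poly p e (- f) = - der_poly p e f"
  by (rule poly_mapping_eqI) (simp add: der_poly_lookup)

lemma der_poly_diff: "der_poly p e (f - g) = der_poly p e f - der_poly p e g"
  by (rule poly_mapping_eqI) (simp add: der_poly_lookup lookup_minus left_diff_distrib)

lemma der_poly_sum: "der_poly p e (\<Sum>i\<in>A. f i) = (\<Sum>i\<in>A. der_poly p e (f i))"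
  by (induction A rule: infinite_finite_induct) (auto simp: der_poly_add)

lemma der_poly_single:
  "der_poly p e (Poly_Mapping.single m c) = Poly_Mapping.single (m + e) (c * of_int (pairing p m))"
  by (rule poly_mapping_eqI) (auto simp: der_poly_lookup lookup_single when_def eq_diff_eq)

lemma sum_single_keys: "(\<Sum>m\<in>Poly_Mapping.keys f. Poly_Mapping.single m (Poly_Mapping.lookup f m)) = f"
  by (rule poly_mapping_eqI) (simp add: lookup_sum lookup_single when_def in_keys_iff eq_commute[of _ "_::'a"])

lemma der_poly_mult_single:
  "der_poly p e (Poly_Mapping.single m a * Poly_Mapping.single n b) =
   der_poly p e (Poly_Mapping.single m a) * Poly_Mapping.single n b
   + Poly_Mapping.single m a * der_poly p e (Poly_Mapping.single n b)"
  by (simp add: der_poly_single mult_single pairing_add algebra_simps flip: single_add)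

lemma der_poly_mult:
  fixes f g :: "('n::finite \<Rightarrow>\<^sub>0 int) \<Rightarrow>\<^sub>0 'k::comm_ring_1"
  shows "der_poly p e (f * g) = der_poly p e f * g + f * der_poly p e g"
proof -
  define s where "s h m = Poly_Mapping.single m (Poly_Mapping.lookup h m)" for h :: "('n \<Rightarrow>\<^sub>0 int) \<Rightarrow>\<^sub>0 'k" and m
  have f: "f = (\<Sum>m\<in>Poly_Mapping.keys f. s f m)" and g: "g = (\<Sum>n\<in>Poly_Mapping.keys g. s g n)"
    by (simp_all add: s_def sum_single_keys)
  have "der_poly p e (f * g) = der_poly p e ((\<Sum>m\<in>Poly_Mapping.keys f. s f m) * (\<Sum>n\<in>Poly_Mapping.keys g. s g n))"
    using f g by simp
  also have "\<dots> = (\<Sum>m\<in>Poly_Mapping.keys f. \<Sum>n\<in>Poly_Mapping.keys g. der_poly p e (s f m * s g n))"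
    by (simp add: sum_distrib_left sum_distrib_right der_poly_sum) (rule sum.swap)
  also have "\<dots> = (\<Sum>m\<in>Poly_Mapping.keys f. \<Sum>n\<in>Poly_Mapping.keys g.
        der_poly p e (s f m) * s g n + s f m * der_poly p e (s g n))"
    by (simp add: s_def der_poly_mult_single)
  also have "\<dots> = der_poly p e (\<Sum>m\<in>Poly_Mapping.keys f. s f m) * (\<Sum>n\<in>Poly_Mapping.keys g. s g n)
       + (\<Sum>m\<in>Poly_Mapping.keys f. s f m) * der_poly p e (\<Sum>n\<in>Poly_Mapping.keys g. s g n)"
    by (simp add: sum_distrib_left sum_distrib_right der_poly_sum sum.distrib) (intro arg_cong2[where f="(+)"] sum.swap)
  finally show ?thesis using f g by simp
qed



instance fract :: ("{idom,ring_char_0}") field_char_0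
proof
  show "inj (of_nat :: nat \<Rightarrow> 'a fract)"
    by (rule injI) (simp add: of_nat_fract eq_fract)
qed

lemma l1:
  fixes a b a' b' Da Db Da' Db' :: "'a::idom"
  assumes "a * b' = a' * b" "Da * b' + a * Db' = Da' * b + a' * Db"
  shows "(Da * b - a * Db) * (b' * b') = (Da' * b' - a' * Db') * (b * b)"
  using assms by algebra
lemma l2:
  fixes a b c d Da Db Dc Dd :: "'a::idom"
  shows "((Da * d + a * Dd + (Dc * b + c * Db)) * (b * d) - (a * d + c * b) * (Db * d + b * Dd)) *
          (b * b * (d * d)) =
        ((Da * b - a * Db) * (d * d) + (Dc * d - c * Dd) * (b * b)) *
          (b * d * (b * d))"
  by algebra
lemma l3:
  fixes a b c d Da Db Dc Dd :: "'a::idom"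
  shows "((Da * c + a * Dc) * (b * d) - (a * c) * (Db * d + b * Dd)) *
          (b * b * d * (b * (d * d))) =
        ((Da * b - a * Db) * c * (b * (d * d)) + (a * (Dc * d - c * Dd)) * (b * b * d)) *
          (b * d * (b * d))"
  by algebra

lemma der_frac_welldef:
  fixes a b a' b' :: "('n::{finite,linorder} \<Rightarrow>\<^sub>0 int) \<Rightarrow>\<^sub>0 'k::field"
  assumes "b \<noteq> 0" "b' \<noteq> 0" "a * b' = a' * b"
  shows "Fraction_Field.Fract (der_poly p e a * b - a * der_poly p e b) (b * b) =
         Fraction_Field.Fract (der_poly p e a' * b' - a' * der_poly p e b') (b' * b')"
proof -
  have h': "der_poly p e a * b' + a * der_poly p e b' = der_poly p e a' * b + a' * der_poly p e b"
    using arg_cong[OF assms(3), of "der_poly p e"] by (simp add: der_poly_mult)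
  have "(der_poly p e a * b - a * der_poly p e b) * (b' * b') =
        (der_poly p e a' * b' - a' * der_poly p e b') * (b * b)"
    using l1[OF assms(3) h'] .
  then show ?thesis using assms by (simp add: eq_fract)
qed

lemma der_frac_Fract:
  fixes a b :: "('n::{finite,linorder} \<Rightarrow>\<^sub>0 int) \<Rightarrow>\<^sub>0 'k::field"
  assumes "b \<noteq> 0"
  shows "der_frac p e (Fraction_Field.Fract a b) = Fraction_Field.Fract (der_poly p e a * b - a * der_poly p e b) (b * b)"
proof -
  let ?P = "\<lambda>y. \<exists>a' b'. b' \<noteq> 0 \<and> Fraction_Field.Fract a b = Fraction_Field.Fract a' b' \<and>
      y = Fraction_Field.Fract (der_poly p e a' * b' - a' * der_poly p e b') (b' * b')"
  have "?P (Fraction_Field.Fract (der_poly p e a * b - a * der_poly p e b) (b * b))" using assms by blast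
  then have "?P (der_frac p e (Fraction_Field.Fract a b))" unfolding der_frac_def by (rule someI)
  then obtain a' b' where "b' \<noteq> 0" "Fraction_Field.Fract a b = Fraction_Field.Fract a' b'"
    "der_frac p e (Fraction_Field.Fract a b) = Fraction_Field.Fract (der_poly p e a' * b' - a' * der_poly p e b') (b' * b')"
    by blast
  then show ?thesis using assms der_frac_welldef[of b b' a a' p e] by (simp add: eq_fract)
qed

lemma der_frac_add:
  fixes x y :: "(('n::{finite,linorder} \<Rightarrow>\<^sub>0 int) \<Rightarrow>\<^sub>0 'k::field) fract"
  shows "der_frac p e (x + y) = der_frac p e x + der_frac p e y"
proof (cases x; cases y)
  fix a b c d
  assume x: "x = Fraction_Field.Fract a b" "b \<noteq> 0" and y: "y = Fraction_Field.Fract c d" "d \<noteq> 0"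
  have bd: "b * d \<noteq> 0" "b * d * (b * d) \<noteq> 0" "b * b \<noteq> 0" "d * d \<noteq> 0" "b * b * (d * d) \<noteq> 0"
    using x y by simp_all
  have e: "(der_poly p e (a * d + c * b) * (b * d) - (a * d + c * b) * der_poly p e (b * d)) *
          (b * b * (d * d)) =
        ((der_poly p e a * b - a * der_poly p e b) * (d * d) + (der_poly p e c * d - c * der_poly p e d) * (b * b)) *
          (b * d * (b * d))"
    unfolding der_poly_mult der_poly_add by (rule l2)
  have 1: "der_frac p e (x + y) = Fraction_Field.Fract (der_poly p e (a * d + c * b) * (b * d) - (a * d + c * b) * der_poly p e (b * d)) (b * d * (b * d))"
    unfolding x add_fract[OF x(2) y(2)] y der_frac_Fract[OF bd(1)] ..
  have 2: "der_frac p e x + der_frac p e y = Fraction_Field.Fract ((der_poly p e a * b - a * der_poly p e b) * (d * d) + (der_poly p e c * d - c * der_poly p e d) * (b * b)) (b * b * (d * d))"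
    unfolding x y der_frac_Fract[OF x(2)] der_frac_Fract[OF y(2)] add_fract[OF bd(3) bd(4)] ..
  show ?thesis unfolding 1 2 eq_fract(1)[OF bd(2) bd(5)] by (rule e)
qed

lemma der_frac_mult:
  fixes x y :: "(('n::{finite,linorder} \<Rightarrow>\<^sub>0 int) \<Rightarrow>\<^sub>0 'k::field) fract"
  shows "der_frac p e (x * y) = der_frac p e x * y + x * der_frac p e y"
proof (cases x; cases y)
  fix a b c d
  assume x: "x = Fraction_Field.Fract a b" "b \<noteq> 0" and y: "y = Fraction_Field.Fract c d" "d \<noteq> 0"
  have bd: "b * d \<noteq> 0" "b * d * (b * d) \<noteq> 0" "b * b * d \<noteq> 0" "b * (d * d) \<noteq> 0" "b * b * d * (b * (d * d)) \<noteq> 0"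
    using x y by simp_all
  have e: "(der_poly p e (a * c) * (b * d) - (a * c) * der_poly p e (b * d)) *
          (b * b * d * (b * (d * d))) =
        ((der_poly p e a * b - a * der_poly p e b) * c * (b * (d * d)) + (a * (der_poly p e c * d - c * der_poly p e d)) * (b * b * d)) *
          (b * d * (b * d))"
    unfolding der_poly_mult der_poly_add by (rule l3)
  have 1: "der_frac p e (x * y) = Fraction_Field.Fract (der_poly p e (a * c) * (b * d) - (a * c) * der_poly p e (b * d)) (b * d * (b * d))"
    unfolding x y mult_fract der_frac_Fract[OF bd(1)] ..
  have 2: "der_frac p e x * y + x * der_frac p e y = Fraction_Field.Fract ((der_poly p e a * b - a * der_poly p e b) * c * (b * (d * d)) + (a * (der_poly p e c * d - c * der_poly p e d)) * (b * b * d)) (b * b * d * (b * (d * d)))"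
    unfolding x y der_frac_Fract[OF x(2)] der_frac_Fract[OF y(2)] mult_fract add_fract[OF bd(3) bd(4)] ..
  show ?thesis unfolding 1 2 eq_fract(1)[OF bd(2) bd(5)] by (rule e)
qed

lemma der_poly_const: "der_poly p e (Poly_Mapping.single 0 c) = 0"
  by (simp add: der_poly_single)

lemma der_poly_one[simp]: "der_poly p e 1 = 0"
  by (metis single_one der_poly_const)

lemma der_frac_Fract1: "der_frac p e (Fraction_Field.Fract a 1) = Fraction_Field.Fract (der_poly p e a) 1"
  by (simp add: der_frac_Fract)

lemma der_frac_zero[simp]: "der_frac p e 0 = 0"
  by (simp add: Zero_fract_def der_frac_Fract1)

lemma der_frac_sum: "der_frac p e (\<Sum>i\<in>A. f i) = (\<Sum>i\<in>A. der_frac p e (f i))"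
  by (induction A rule: infinite_finite_induct) (auto simp: der_frac_add)

lemma der_frac_uminus: "der_frac p e (- x) = - der_frac p e x"
  using der_frac_add[of p e x "-x"] by (simp add: add_eq_0_iff)

lemma der_frac_diff: "der_frac p e (x - y) = der_frac p e x - der_frac p e y"
  using der_frac_add[of p e x "-y"] by (simp add: der_frac_uminus)

lemma of_int_fract: "(of_int k :: 'a::idom fract) = Fraction_Field.Fract (of_int k) 1"
proof (cases "k \<ge> 0")
  case True
  then obtain n where "k = int n" using nonneg_eq_int by blast
  then show ?thesis by (simp add: of_nat_fract)
next
  case False
  then have "- k \<ge> 0" by simp
  then obtain n where "- k = int n" using nonneg_eq_int by blast
  then have "k = - int n" by simp
  then show ?thesis by (simp add: of_nat_fract)
qed

lemma Fract_zero1: "Fraction_Field.Fract 0 1 = 0"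
  by (simp add: Zero_fract_def)

lemma der_frac_of_nat[simp]: "der_frac p e (of_nat k) = 0"
proof -
  have "of_nat k = Fraction_Field.Fract (Poly_Mapping.single 0 (of_nat k)) 1"
    by (simp only: of_nat_fract single_of_nat)
  then show ?thesis unfolding der_frac_Fract1 der_poly_const Fract_zero1 by (rule ssubst) (simp only: der_frac_Fract1 der_poly_const Fract_zero1)
qed

lemma der_frac_of_int[simp]: "der_frac p e (of_int k) = 0"
proof -
  have "of_int k = Fraction_Field.Fract (Poly_Mapping.single 0 (of_int k)) 1"
    by (simp only: of_int_fract single_of_int)
  then show ?thesis unfolding der_frac_Fract1 der_poly_const Fract_zero1 by (rule ssubst) (simp only: der_frac_Fract1 der_poly_const Fract_zero1)
qed

lemma Fract_zero_num: "Fraction_Field.Fract 0 b = 0"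
  by (metis Zero_fract_def eq_fract(3))

lemma der_frac_inverse_of_nat[simp]:
  "der_frac p e (inverse (of_nat k) :: (('n::{finite,linorder} \<Rightarrow>\<^sub>0 int) \<Rightarrow>\<^sub>0 'k::field_char_0) fract) = 0"
proof (cases "k = 0")
  case True then show ?thesis by simp
next
  case False
  have ne: "Poly_Mapping.single 0 (of_nat k :: 'k) \<noteq> 0" using False by (simp add: single_eq_0_iff)
  have h: "inverse (of_nat k) = Fraction_Field.Fract 1 (Poly_Mapping.single 0 (of_nat k :: 'k))"
    by (simp only: of_nat_fract single_of_nat inverse_fract)
  show ?thesis unfolding h der_frac_Fract[OF ne] der_poly_const der_poly_one
    by (simp only: mult_zero_left mult_zero_right diff_zero Fract_zero_num)
qed




type_synonym ('n,'k) KK = "(('n \<Rightarrow>\<^sub>0 int) \<Rightarrow>\<^sub>0 'k) fract"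

definition Eser :: "('n::{finite,linorder} \<Rightarrow>\<^sub>0 int) \<Rightarrow> ('n \<Rightarrow>\<^sub>0 int) \<Rightarrow> ('n,'k::field_char_0) KK \<Rightarrow> ('n,'k) KK fps" where
  "Eser p e x = Abs_fps (\<lambda>n. (der_frac p e ^^ n) x / of_nat (fact n))"

definition Dh :: "('n::{finite,linorder} \<Rightarrow>\<^sub>0 int) \<Rightarrow> ('n \<Rightarrow>\<^sub>0 int) \<Rightarrow> ('n,'k::field_char_0) KK fps \<Rightarrow> ('n,'k) KK fps" where
  "Dh p e F = Abs_fps (\<lambda>n. der_frac p e (F $ n))"

lemma Eser_nth: "Eser p e x $ n = (der_frac p e ^^ n) x / of_nat (fact n)"
  by (simp add: Eser_def)

lemma Eser_0[simp]: "Eser p e x $ 0 = x"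
  by (simp add: Eser_def)

lemma Dh_nth[simp]: "Dh p e F $ n = der_frac p e (F $ n)"
  by (simp add: Dh_def)

lemma der_frac_div_nat:
  fixes y :: "('n::{finite,linorder},'k::field_char_0) KK"
  shows "der_frac p e (y / of_nat k) = der_frac p e y / of_nat k"
  by (simp add: divide_inverse der_frac_mult)

lemma aux_cancel: "(s::'a::field) \<noteq> 0 \<Longrightarrow> s * (y / (s * z)) = y / z"
  by (cases "z = 0") (simp_all add: field_simps)

lemma Eser_deriv: "fps_deriv (Eser p e x) = Dh p e (Eser p e x)"
proof (rule fps_ext)
  fix n
  have "fps_deriv (Eser p e x) $ n = of_nat (Suc n) * ((der_frac p e ^^ Suc n) x / of_nat (fact (Suc n)))"
    by (simp add: Eser_nth)
  also have "\<dots> = of_nat (Suc n) * (der_frac p e ((der_frac p e ^^ n) x) / (of_nat (Suc n) * of_nat (fact n)))"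
    by (simp only: fact_Suc of_nat_mult of_nat_id funpow.simps comp_def)
  also have "\<dots> = der_frac p e ((der_frac p e ^^ n) x) / of_nat (fact n)"
    by (rule aux_cancel) (simp only: of_nat_eq_0_iff nat.distinct(2) not_False_eq_True)
  also have "\<dots> = Dh p e (Eser p e x) $ n"
    by (simp only: Eser_nth Dh_nth der_frac_div_nat)
  finally show "fps_deriv (Eser p e x) $ n = Dh p e (Eser p e x) $ n" .
qed

lemma Dh_add: "Dh p e (F + G) = Dh p e F + Dh p e G"
  by (rule fps_ext) (simp add: der_frac_add)

lemma Dh_mult: "Dh p e (F * G) = Dh p e F * G + F * Dh p e G"
  by (rule fps_ext) (simp add: fps_mult_nth der_frac_sum der_frac_mult sum.distrib)

lemma Eser_unique:
  assumes "fps_deriv F = Dh p e F"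
  shows "F = Eser p e (F $ 0)"
proof (rule fps_ext)
  fix n show "F $ n = Eser p e (F $ 0) $ n"
  proof (induction n)
    case 0 show ?case by simp
  next
    case (Suc n)
    have a: "of_nat (Suc n) * F $ Suc n = der_frac p e (F $ n)"
      using arg_cong[OF assms, of "\<lambda>G. G $ n"] by simp
    have b: "of_nat (Suc n) * Eser p e (F $ 0) $ Suc n = der_frac p e (Eser p e (F $ 0) $ n)"
      using arg_cong[OF Eser_deriv[of p e "F $ 0"], of "\<lambda>G. G $ n"] by simp
    have "of_nat (Suc n) * F $ Suc n = of_nat (Suc n) * Eser p e (F $ 0) $ Suc n"
      using a b Suc by simp
    then show ?case by (simp del: of_nat_Suc)
  qed
qed

lemma Eser_mult: "Eser p e (x * y) = Eser p e x * Eser p e y"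
proof -
  have "fps_deriv (Eser p e x * Eser p e y) = Dh p e (Eser p e x * Eser p e y)"
    by (simp add: fps_deriv_mult Eser_deriv Dh_mult)
  from Eser_unique[OF this] show ?thesis by (simp add: fps_mult_nth)
qed

lemma Eser_add: "Eser p e (x + y) = Eser p e x + Eser p e y"
proof -
  have "fps_deriv (Eser p e x + Eser p e y) = Dh p e (Eser p e x + Eser p e y)"
    by (simp add: Eser_deriv Dh_add)
  from Eser_unique[OF this] show ?thesis by simp
qed

lemma Eser_const:
  assumes "der_frac p e c = 0"
  shows "Eser p e c = fps_const c"
proof -
  have "fps_deriv (fps_const c) = Dh p e (fps_const c)"
    by (rule fps_ext) (simp add: assms)
  from Eser_unique[OF this] show ?thesis by simp
qed

lemma der_frac_one[simp]: "der_frac p e 1 = 0"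
  using der_frac_of_nat[of p e 1] by simp

lemma Eser_one: "Eser p e 1 = 1"
  using Eser_const[of p e 1] by simp




definition ratE :: "('n::{finite,linorder} \<Rightarrow>\<^sub>0 int) \<Rightarrow> ('n \<Rightarrow>\<^sub>0 int) \<Rightarrow> ('n,'k::field_char_0) KK \<Rightarrow> bool" where
  "ratE p e x \<longleftrightarrow> (\<exists>P Q. Q \<noteq> 0 \<and> fps_of_poly Q * Eser p e x = fps_of_poly P)"

lemma ri_iff: "rationally_integrable (der_frac p e :: ('n::{finite,linorder},'k::field_char_0) KK \<Rightarrow> _) \<longleftrightarrow> (\<forall>x::('n,'k) KK. ratE p e x)"
  unfolding rationally_integrable_def ratE_def Eser_def by (rule refl)

lemma ratE_add:
  assumes "ratE p e x" "ratE p e y" shows "ratE p e (x + y)"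
proof -
  obtain P1 Q1 where 1: "Q1 \<noteq> 0" "fps_of_poly Q1 * Eser p e x = fps_of_poly P1" using assms(1) ratE_def by blast
  obtain P2 Q2 where 2: "Q2 \<noteq> 0" "fps_of_poly Q2 * Eser p e y = fps_of_poly P2" using assms(2) ratE_def by blast
  have "fps_of_poly (Q1 * Q2) * Eser p e (x + y) =
     (fps_of_poly Q1 * Eser p e x) * fps_of_poly Q2 + (fps_of_poly Q2 * Eser p e y) * fps_of_poly Q1"
    by (simp add: Eser_add fps_of_poly_mult algebra_simps)
  also have "\<dots> = fps_of_poly (P1 * Q2 + P2 * Q1)"
    by (simp add: 1 2 fps_of_poly_mult fps_of_poly_add)
  finally show ?thesis unfolding ratE_def using 1 2 by (intro exI[of _ "P1 * Q2 + P2 * Q1"] exI[of _ "Q1 * Q2"]) simp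
qed

lemma ratE_mult:
  assumes "ratE p e x" "ratE p e y" shows "ratE p e (x * y)"
proof -
  obtain P1 Q1 where 1: "Q1 \<noteq> 0" "fps_of_poly Q1 * Eser p e x = fps_of_poly P1" using assms(1) ratE_def by blast
  obtain P2 Q2 where 2: "Q2 \<noteq> 0" "fps_of_poly Q2 * Eser p e y = fps_of_poly P2" using assms(2) ratE_def by blast
  have "fps_of_poly (Q1 * Q2) * Eser p e (x * y) =
     (fps_of_poly Q1 * Eser p e x) * (fps_of_poly Q2 * Eser p e y)"
    by (simp add: Eser_mult fps_of_poly_mult algebra_simps)
  also have "\<dots> = fps_of_poly (P1 * P2)"
    by (simp add: 1 2 fps_of_poly_mult)
  finally show ?thesis unfolding ratE_def using 1 2 by (intro exI[of _ "P1 * P2"] exI[of _ "Q1 * Q2"]) simp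
qed

lemma ratE_const:
  assumes "der_frac p e c = 0" shows "ratE p e c"
  unfolding ratE_def Eser_const[OF assms]
  by (intro exI[of _ "[:c:]"] exI[of _ 1]) (simp add: fps_of_poly_const)

lemma ratE_inverse:
  assumes "ratE p e x" "x \<noteq> 0" shows "ratE p e (inverse x)"
proof -
  obtain P Q where 1: "Q \<noteq> 0" "fps_of_poly Q * Eser p e x = fps_of_poly P" using assms(1) ratE_def by blast
  have "Eser p e x \<noteq> 0"
  proof
    assume "Eser p e x = 0"
    then have "Eser p e x $ 0 = 0" by simp
    with assms(2) show False by simp
  qed
  moreover have "fps_of_poly Q \<noteq> 0" using 1(1) fps_of_poly_eq_iff[of Q 0] by simp
  ultimately have "fps_of_poly P \<noteq> 0" using 1(2) by (metis no_zero_divisors)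
  then have P: "P \<noteq> 0" by auto
  have "fps_of_poly P * Eser p e (inverse x) = fps_of_poly Q * Eser p e (x * inverse x)"
    by (simp add: Eser_mult 1(2)[symmetric] algebra_simps)
  also have "\<dots> = fps_of_poly Q" using assms(2) by (simp add: Eser_one)
  finally show ?thesis unfolding ratE_def using P by blast
qed

lemma ratE_sum:
  assumes "\<And>i. i \<in> A \<Longrightarrow> ratE p e (f i)" shows "ratE p e (\<Sum>i\<in>A. f i)"
  using assms
proof (induction A rule: infinite_finite_induct)
  case (infinite A) then show ?case by (simp add: ratE_const)
next
  case empty then show ?case by (simp add: ratE_const)
next
  case (insert x F) then show ?case by (simp add: ratE_add)
qed

lemma Fract_sum1: "Fraction_Field.Fract (\<Sum>i\<in>A. f i) 1 = (\<Sum>i\<in>A. Fraction_Field.Fract (f i) 1)"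
proof (induction A rule: infinite_finite_induct)
  case (insert x F)
  then show ?case by (simp add: insert.IH[symmetric])
qed (simp_all add: Fract_zero1)

lemma ratE_all:
  fixes x :: "('n::{finite,linorder},'k::field_char_0) KK"
  assumes mono: "\<And>m. ratE p e (Fraction_Field.Fract (Poly_Mapping.single m 1) 1 :: ('n,'k) KK)"
  shows "ratE p e x"
proof -
  have poly: "ratE p e (Fraction_Field.Fract a 1)" for a :: "('n \<Rightarrow>\<^sub>0 int) \<Rightarrow>\<^sub>0 'k"
  proof -
    have "Fraction_Field.Fract a 1 =
        (\<Sum>m\<in>Poly_Mapping.keys a. Fraction_Field.Fract (Poly_Mapping.single 0 (Poly_Mapping.lookup a m)) 1 *
                                  Fraction_Field.Fract (Poly_Mapping.single m 1) 1)"
      by (subst sum_single_keys[of a, symmetric]) (simp add: Fract_sum1 mult_single)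
    also have "ratE p e \<dots>"
      apply (rule ratE_sum)
      apply (rule ratE_mult)
      apply (rule ratE_const)
      apply (simp add: der_frac_Fract1 der_poly_const Fract_zero1)
      apply (rule mono)
      done
    finally show ?thesis .
  qed
  show ?thesis
  proof (cases x)
    case (Fract a b)
    then have eq: "x = Fraction_Field.Fract a 1 * inverse (Fraction_Field.Fract b 1)" by simp
    have nz: "Fraction_Field.Fract b 1 \<noteq> 0" using Fract by (simp add: Zero_fract_def eq_fract)
    have "ratE p e (Fraction_Field.Fract a 1 * inverse (Fraction_Field.Fract b 1))"
      by (rule ratE_mult[OF poly ratE_inverse[OF poly nz]])
    then show ?thesis by (simp only: eq)
  qed
qed




definition chiK :: "('n::{finite,linorder} \<Rightarrow>\<^sub>0 int) \<Rightarrow> ('n,'k::field_char_0) KK" where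
  "chiK m = Fraction_Field.Fract (Poly_Mapping.single m 1) 1"

lemma der_chiK: "der_frac p e (chiK m :: ('n::{finite,linorder},'k::field_char_0) KK) =
    of_int (pairing p m) * chiK e * chiK m"
  by (simp add: chiK_def der_frac_Fract1 der_poly_single of_int_fract mult_single add.commute
      flip: single_of_int)

lemma der_chiK_pow: "der_frac p e (chiK e ^ n :: ('n::{finite,linorder},'k::field_char_0) KK) =
    of_nat n * of_int (pairing p e) * chiK e ^ Suc n"
proof (induction n)
  case 0 then show ?case by simp
next
  case (Suc n)
  show ?case unfolding power_Suc der_frac_mult Suc der_chiK
    by (simp add: algebra_simps)
qed

lemma der_chiK_pow_mono: "der_frac p e (chiK e ^ n * chiK m :: ('n::{finite,linorder},'k::field_char_0) KK) =
    of_int (pairing p m + int n * pairing p e) * chiK e ^ Suc n * chiK m"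
  unfolding der_frac_mult der_chiK_pow der_chiK
  by (simp add: algebra_simps)

lemma iter_chiK: "\<exists>\<beta>::int. (der_frac p e ^^ n) (chiK m :: ('n::{finite,linorder},'k::field_char_0) KK) =
    of_int \<beta> * chiK e ^ n * chiK m"
proof (induction n)
  case 0 show ?case by (intro exI[of _ 1]) simp
next
  case (Suc n)
  then obtain \<beta> where b: "(der_frac p e ^^ n) (chiK m :: ('n,'k) KK) = of_int \<beta> * chiK e ^ n * chiK m" by blast
  have "(der_frac p e ^^ Suc n) (chiK m :: ('n,'k) KK) = der_frac p e (of_int \<beta> * (chiK e ^ n * chiK m))"
    by (simp add: b mult.assoc)
  also have "\<dots> = of_int (\<beta> * (pairing p m + int n * pairing p e)) * chiK e ^ Suc n * chiK m"
    by (subst der_frac_mult) (simp add: der_chiK_pow_mono)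
  finally show ?case by blast
qed

lemma key_chiK: "(der_frac p e ^^ Suc n) (chiK m :: ('n::{finite,linorder},'k::field_char_0) KK) =
    of_int (pairing p m + int n * pairing p e) * chiK e * (der_frac p e ^^ n) (chiK m)"
proof -
  obtain \<beta> where b: "(der_frac p e ^^ n) (chiK m :: ('n,'k) KK) = of_int \<beta> * chiK e ^ n * chiK m"
    using iter_chiK by blast
  have "(der_frac p e ^^ Suc n) (chiK m :: ('n,'k) KK) = der_frac p e (of_int \<beta> * (chiK e ^ n * chiK m))"
    by (simp add: b mult.assoc)
  also have "\<dots> = of_int (pairing p m + int n * pairing p e) * chiK e * (of_int \<beta> * chiK e ^ n * chiK m)"
    by (subst der_frac_mult) (simp add: der_chiK_pow_mono)
  finally show ?thesis by (simp add: b)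
qed

lemma key_chiK': "der_frac p e ((der_frac p e ^^ n) (chiK m :: ('n::{finite,linorder},'k::field_char_0) KK)) =
    of_int (pairing p m + int n * pairing p e) * chiK e * (der_frac p e ^^ n) (chiK m)"
  using key_chiK[where p=p and e=e and n=n and m=m] by simp

lemma Eser_rec: "of_nat (Suc n) * Eser p e (chiK m :: ('n::{finite,linorder},'k::field_char_0) KK) $ Suc n =
    of_int (pairing p m + int n * pairing p e) * chiK e * Eser p e (chiK m) $ n"
proof -
  have "of_nat (Suc n) * Eser p e (chiK m :: ('n,'k) KK) $ Suc n = der_frac p e (Eser p e (chiK m) $ n)"
    using arg_cong[OF Eser_deriv[of p e "chiK m :: ('n,'k) KK"], of "\<lambda>G. G $ n"] by simp
  also have "\<dots> = of_int (pairing p m + int n * pairing p e) * chiK e * Eser p e (chiK m) $ n"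
    by (simp only: Eser_nth der_frac_div_nat key_chiK' times_divide_eq_right)
  finally show ?thesis .
qed

definition Lf :: "'a::comm_ring_1 \<Rightarrow> 'a fps" where
  "Lf b = fps_const 1 + fps_const b * fps_X"

lemma Lf_nth: "Lf b $ n = (if n = 0 then 1 else if n = 1 then b else 0)"
  by (simp add: Lf_def)

lemma Lf_mult_nth: "(Lf b * G) $ n = G $ n + (if n = 0 then 0 else b * G $ (n - 1))"
proof -
  have "Lf b * G = G + fps_const b * (fps_X * G)" by (simp add: Lf_def algebra_simps)
  then show ?thesis by simp
qed

lemma Lf_poly: "fps_of_poly [:1, b:] = Lf b"
  by (simp add: Lf_def fps_of_poly_pCons fps_of_poly_const mult.commute)

lemma Lf_deriv: "fps_deriv (Lf b) = fps_const b"
  by (simp add: Lf_def)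

lemma Lf_pow_0: "(Lf b ^ k) $ 0 = 1"
  by (simp add: fps_nth_power_0 Lf_nth)

lemma Lf_ne: "Lf (b::'a::field) \<noteq> 0"
proof
  assume "Lf b = 0" then have "Lf b $ 0 = 0" by simp
  then show False by (simp add: Lf_nth)
qed

lemma Lf_deriv_pow: "Lf b * fps_deriv (Lf b ^ k) = fps_const (of_nat k * b) * Lf b ^ k"
proof (induction k)
  case 0 then show ?case by simp
next
  case (Suc k)
  have "Lf b * fps_deriv (Lf b ^ Suc k) = fps_const b * Lf b ^ Suc k + Lf b * (Lf b * fps_deriv (Lf b ^ k))"
    by (simp add: fps_deriv_mult Lf_deriv algebra_simps)
  also have "\<dots> = fps_const (of_nat (Suc k) * b) * Lf b ^ Suc k"
    unfolding Suc by (simp add: algebra_simps flip: fps_const_mult fps_const_add)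
  finally show ?case .
qed

lemma ode_chiK:
  "Lf (- of_int (pairing p e) * chiK e) * fps_deriv (Eser p e (chiK m :: ('n::{finite,linorder},'k::field_char_0) KK))
   = fps_const (of_int (pairing p m) * chiK e) * Eser p e (chiK m)"
proof (rule fps_ext)
  fix n
  let ?E = "Eser p e (chiK m :: ('n,'k) KK)"
  show "(Lf (- of_int (pairing p e) * chiK e) * fps_deriv ?E) $ n = (fps_const (of_int (pairing p m) * chiK e) * ?E) $ n"
  proof (cases n)
    case 0
    then show ?thesis using Eser_rec[of 0 p e m] by (simp add: Lf_mult_nth Lf_nth)
  next
    case (Suc k)
    have r1: "of_nat (Suc (Suc k)) * ?E $ Suc (Suc k) = of_int (pairing p m + int (Suc k) * pairing p e) * chiK e * ?E $ Suc k"
      by (rule Eser_rec)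
    have r0: "fps_deriv ?E $ k = of_nat (Suc k) * ?E $ Suc k" by simp
    have "(Lf (- of_int (pairing p e) * chiK e) * fps_deriv ?E) $ n =
       of_nat (Suc (Suc k)) * ?E $ Suc (Suc k) - of_int (pairing p e) * chiK e * (of_nat (Suc k) * ?E $ Suc k)"
      using Suc by (simp only: Lf_mult_nth fps_deriv_nth r0) simp
    also have "\<dots> = of_int (pairing p m) * chiK e * ?E $ Suc k"
      unfolding r1 by (simp add: algebra_simps)
    finally show ?thesis using Suc by simp
  qed
qed

lemma ode_unique:
  fixes X :: "'a::field_char_0 fps"
  assumes "Lf b * fps_deriv X = fps_const g * X" "X $ 0 = 0"
  shows "X = 0"
proof -
  have "X $ n = 0" for n
  proof (induction n)
    case 0 then show ?case using assms(2) .
  next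
    case (Suc n)
    have "(Lf b * fps_deriv X) $ n = (fps_const g * X) $ n" using assms(1) by simp
    then have "of_nat (Suc n) * X $ Suc n + (if n = 0 then 0 else b * (of_nat n * X $ n)) = g * X $ n"
      by (cases n) (simp_all add: Lf_mult_nth Lf_nth)
    then have "of_nat (Suc n) * X $ Suc n = 0" using Suc.IH by (cases n) (auto simp del: of_nat_Suc)
    moreover have "(of_nat (Suc n) :: 'a) \<noteq> 0" by (rule of_nat_neq_0)
    ultimately show ?case by simp
  qed
  then show ?thesis by (simp add: fps_eq_iff)
qed




lemma coeff_L:
  fixes R :: "'a::comm_ring_1 poly"
  shows "coeff ([:1, b:] * R) k = coeff R k + (if k = 0 then 0 else b * coeff R (k - 1))"
  by (cases k) (simp_all add: mult_pCons_left coeff_pCons)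

lemma coeff_mult_bound:
  fixes X Y :: "'a::comm_ring_1 poly"
  assumes "degree X \<le> i" "degree Y \<le> j"
  shows "coeff (X * Y) (i + j) = coeff X i * coeff Y j"
proof -
  have "coeff (X * Y) (i + j) = (\<Sum>k\<le>i + j. coeff X k * coeff Y (i + j - k))"
    by (rule coeff_mult)
  also have "\<dots> = coeff X i * coeff Y (i + j - i)"
  proof (rule sum.remove[THEN trans])
    show "finite {..i + j}" by simp
    show "i \<in> {..i + j}" by simp
    have "coeff X k * coeff Y (i + j - k) = 0" if "k \<in> {..i + j} - {i}" for k
    proof (cases "k < i")
      case True
      then have "degree Y < i + j - k" using assms(2) by linarith
      then show ?thesis by (simp add: coeff_eq_0)
    next
      case False
      with that have "degree X < k" using assms(1) by auto
      then show ?thesis by (simp add: coeff_eq_0)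
    qed
    then show "coeff X i * coeff Y (i + j - i) + (\<Sum>k\<in>{..i + j} - {i}. coeff X k * coeff Y (i + j - k))
        = coeff X i * coeff Y (i + j - i)" by simp
  qed
  finally show ?thesis by simp
qed

lemma coeff_A:
  fixes Q :: "'a::field poly" and b g :: 'a
  defines "A \<equiv> [:1, b:] * pderiv Q + smult g Q"
  shows "degree A \<le> degree Q" "coeff A (degree Q) = (b * of_nat (degree Q) + g) * lead_coeff Q"
proof -
  have cA: "coeff A k = coeff (pderiv Q) k + (if k = 0 then 0 else b * coeff (pderiv Q) (k - 1)) + g * coeff Q k" for k
    unfolding A_def coeff_add coeff_smult coeff_L by simp
  show "degree A \<le> degree Q"
  proof (rule degree_le, intro allI impI)
    fix k assume k: "degree Q < k"
    then obtain j where j: "k = Suc j" by (cases k) auto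
    show "coeff A k = 0" using k unfolding cA j by (simp add: coeff_pderiv coeff_eq_0)
  qed
  show "coeff A (degree Q) = (b * of_nat (degree Q) + g) * lead_coeff Q"
  proof (cases "degree Q")
    case 0 then show ?thesis
      by (simp add: cA coeff_pderiv coeff_eq_0)
  next
    case (Suc j) then show ?thesis
      by (simp add: cA coeff_pderiv coeff_eq_0 algebra_simps del: of_nat_Suc)
  qed
qed




lemma chiK_ne: "(chiK m :: ('n::{finite,linorder},'k::field_char_0) KK) \<noteq> 0"
  by (simp add: chiK_def Zero_fract_def eq_fract single_eq_0_iff)

lemma mono_rat:
  assumes a2: "pairing p e * pairing p e = 1"
  shows "ratE p e (chiK m :: ('n::{finite,linorder},'k::field_char_0) KK)"
proof -
  define a where "a = pairing p e"
  define c where "c = pairing p m"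
  define z where "z = (chiK e :: ('n,'k) KK)"
  define w where "w = (chiK m :: ('n,'k) KK)"
  define b where "b = - of_int a * z"
  define E where "E = Eser p e w"
  have ode: "Lf b * fps_deriv E = fps_const (of_int c * z) * E"
    unfolding b_def E_def a_def c_def z_def w_def by (rule ode_chiK)
  have caa: "c * a * a = c" using a2 unfolding a_def by (simp add: mult.assoc)
  show ?thesis
  proof (cases "c * a \<ge> 0")
    case True
    define k where "k = nat (c * a)"
    have kb: "of_nat k * b + of_int c * z = 0"
    proof -
      have "of_nat k * b + of_int c * z = of_int (c - c * a * a) * z"
        using True by (simp add: k_def b_def algebra_simps)
      then show ?thesis by (simp add: caa)
    qed
    define X where "X = Lf b ^ k * E - fps_const w"
    have "Lf b * fps_deriv X = (Lf b * fps_deriv (Lf b ^ k)) * E + Lf b ^ k * (Lf b * fps_deriv E)"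
      by (simp add: X_def fps_deriv_mult algebra_simps)
    also have "\<dots> = fps_const (of_nat k * b + of_int c * z) * (Lf b ^ k * E)"
      unfolding Lf_deriv_pow ode by (simp add: algebra_simps flip: fps_const_add)
    also have "\<dots> = fps_const 0 * X" by (simp add: kb)
    finally have "Lf b * fps_deriv X = fps_const 0 * X" .
    moreover have "X $ 0 = 0" by (simp add: X_def Lf_pow_0 E_def)
    ultimately have "X = 0" by (rule ode_unique)
    then have "fps_of_poly ([:1, b:] ^ k) * E = fps_of_poly [:w:]"
      by (simp add: X_def fps_of_poly_power Lf_poly fps_of_poly_const)
    moreover have "[:1, b:] ^ k \<noteq> 0" by simp
    ultimately show ?thesis unfolding ratE_def E_def w_def by blast
  next
    case False
    define k where "k = nat (- (c * a))"
    have kb: "of_nat k * b = of_int c * z"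
    proof -
      have "of_nat k * b = of_int (c * a * a) * z"
        using False by (simp add: k_def b_def algebra_simps)
      then show ?thesis by (simp add: caa)
    qed
    define X where "X = E - fps_const w * Lf b ^ k"
    have "Lf b * fps_deriv X = Lf b * fps_deriv E - fps_const w * (Lf b * fps_deriv (Lf b ^ k))"
      by (simp add: X_def algebra_simps)
    also have "\<dots> = fps_const (of_int c * z) * X"
      unfolding Lf_deriv_pow ode kb by (simp add: X_def algebra_simps)
    finally have "Lf b * fps_deriv X = fps_const (of_int c * z) * X" .
    moreover have "X $ 0 = 0" by (simp add: X_def Lf_pow_0 E_def)
    ultimately have "X = 0" by (rule ode_unique)
    then have "fps_of_poly 1 * E = fps_of_poly (smult w ([:1, b:] ^ k))"
      by (simp add: X_def fps_of_poly_power Lf_poly fps_of_poly_smult)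
    then show ?thesis unfolding ratE_def E_def w_def by (metis one_neq_zero)
  qed
qed




lemma mono_not_rat:
  assumes nd: "\<not> pairing p e dvd pairing p m"
  shows "\<not> ratE p e (chiK m :: ('n::{finite,linorder},'k::field_char_0) KK)"
proof
  assume "ratE p e (chiK m :: ('n,'k) KK)"
  define a where "a = pairing p e"
  define c where "c = pairing p m"
  define z where "z = (chiK e :: ('n,'k) KK)"
  define w where "w = (chiK m :: ('n,'k) KK)"
  define b where "b = - of_int a * z"
  define g where "g = of_int c * z"
  define E where "E = Eser p e w"
  obtain P Q where Q: "Q \<noteq> 0" and QE: "fps_of_poly Q * E = fps_of_poly P"
    using \<open>ratE p e _\<close> unfolding ratE_def E_def w_def by blast
  have ode: "Lf b * fps_deriv E = fps_const g * E"
    unfolding b_def E_def a_def c_def z_def w_def g_def by (rule ode_chiK)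
  have "E \<noteq> 0"
  proof
    assume "E = 0" then have "E $ 0 = 0" by simp
    then show False by (simp add: E_def w_def chiK_ne)
  qed
  moreover have "fps_of_poly Q \<noteq> 0" using Q fps_of_poly_eq_iff[of Q 0] by simp
  ultimately have "fps_of_poly P \<noteq> 0" using QE by (metis no_zero_divisors)
  then have P: "P \<noteq> 0" by auto
  have d1: "fps_of_poly (pderiv Q) * E + fps_of_poly Q * fps_deriv E = fps_of_poly (pderiv P)"
    using arg_cong[OF QE, of fps_deriv] by (simp add: fps_deriv_mult fps_of_poly_pderiv add.commute)
  have "fps_of_poly (([:1, b:] * pderiv Q + smult g Q) * P) =
      (Lf b * fps_of_poly (pderiv Q) + fps_const g * fps_of_poly Q) * (fps_of_poly Q * E)"
    by (simp only: fps_of_poly_mult fps_of_poly_add fps_of_poly_smult Lf_poly QE)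
  also have "\<dots> = fps_of_poly Q * Lf b * (fps_of_poly (pderiv Q) * E) + fps_of_poly Q * fps_of_poly Q * (fps_const g * E)"
    by (simp add: algebra_simps)
  also have "\<dots> = fps_of_poly Q * Lf b * (fps_of_poly (pderiv Q) * E + fps_of_poly Q * fps_deriv E)"
    unfolding ode[symmetric] by (simp add: algebra_simps)
  also have "\<dots> = fps_of_poly ([:1, b:] * pderiv P * Q)"
    by (simp only: d1 fps_of_poly_mult Lf_poly) (simp add: mult_ac)
  finally have id: "([:1, b:] * pderiv Q + smult g Q) * P = [:1, b:] * pderiv P * Q"
    by (simp only: fps_of_poly_eq_iff)
  define q where "q = degree Q"
  define d where "d = degree P"
  have cA: "degree ([:1, b:] * pderiv Q + smult g Q) \<le> q"
    "coeff ([:1, b:] * pderiv Q + smult g Q) q = (b * of_nat q + g) * lead_coeff Q"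
    using coeff_A[of b Q g] unfolding q_def by auto
  have cB: "degree ([:1, b:] * pderiv P + smult 0 P) \<le> d"
    "coeff ([:1, b:] * pderiv P + smult 0 P) d = (b * of_nat d + 0) * lead_coeff P"
    using coeff_A[of b P 0] unfolding d_def by auto
  have "coeff (([:1, b:] * pderiv Q + smult g Q) * P) (q + d) = coeff ([:1, b:] * pderiv Q + smult g Q) q * coeff P d"
    by (rule coeff_mult_bound[OF cA(1)]) (simp add: d_def)
  also have "\<dots> = (b * of_nat q + g) * lead_coeff Q * lead_coeff P"
    unfolding cA(2) d_def ..
  finally have l: "coeff (([:1, b:] * pderiv Q + smult g Q) * P) (q + d) = (b * of_nat q + g) * lead_coeff Q * lead_coeff P" .
  have r: "coeff ([:1, b:] * pderiv P * Q) (d + q) = (b * of_nat d) * lead_coeff P * lead_coeff Q"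
    using coeff_mult_bound[OF cB(1), of Q q] cB(2) by (simp add: q_def)
  have "(b * of_nat q + g) * lead_coeff Q * lead_coeff P = (b * of_nat d) * lead_coeff P * lead_coeff Q"
    using l r id by (metis add.commute)
  then have "(b * of_nat q + g) * (lead_coeff Q * lead_coeff P) = (b * of_nat d) * (lead_coeff Q * lead_coeff P)"
    by (simp add: mult_ac)
  moreover have "lead_coeff Q * lead_coeff P \<noteq> 0" using P Q by simp
  ultimately have "b * of_nat q + g = b * of_nat d" by simp
  then have "of_int (c - a * int q + a * int d) * z = 0"
    by (simp add: b_def g_def algebra_simps)
  moreover have "z \<noteq> 0" by (simp add: z_def chiK_ne)
  ultimately have "(of_int (c - a * int q + a * int d) :: ('n,'k) KK) = 0" by simp
  then have "c - a * int q + a * int d = 0" by (simp only: of_int_eq_0_iff)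
  then have "c = a * (int q - int d)" by (simp add: algebra_simps)
  then have "a dvd c" by simp
  with nd show False by (simp add: a_def c_def)
qed

lemma pairing_single: "pairing p (Poly_Mapping.single i 1) = Poly_Mapping.lookup p i"
proof -
  have h: "(\<lambda>ia. Poly_Mapping.lookup p ia * Poly_Mapping.lookup (Poly_Mapping.single i 1) ia) =
      (\<lambda>ia. if ia = i then Poly_Mapping.lookup p ia else 0)"
    by (auto simp: lookup_single when_def)
  show ?thesis unfolding pairing_def h by simp
qed

theorem lemma3p4:
  fixes p e :: "'n::{finite,linorder} \<Rightarrow>\<^sub>0 int"
  assumes "primitive_vec p"
  shows "rationally_integrable (der_frac p e :: (('n \<Rightarrow>\<^sub>0 int) \<Rightarrow>\<^sub>0 'k::field_char_0) fract \<Rightarrow> _)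
    \<longleftrightarrow> (pairing p e = 1 \<or> pairing p e = -1)"
proof
  assume ri: "rationally_integrable (der_frac p e :: (('n \<Rightarrow>\<^sub>0 int) \<Rightarrow>\<^sub>0 'k::field_char_0) fract \<Rightarrow> _)"
  have "\<forall>i. pairing p e dvd Poly_Mapping.lookup p i"
  proof
    fix i
    have "ratE p e (chiK (Poly_Mapping.single i 1) :: ('n,'k) KK)" using ri by (simp add: ri_iff)
    then show "pairing p e dvd Poly_Mapping.lookup p i"
      using mono_not_rat[of p e "Poly_Mapping.single i 1"] by (auto simp: pairing_single)
  qed
  then have "is_unit (pairing p e)" using assms unfolding primitive_vec_def by blast
  then show "pairing p e = 1 \<or> pairing p e = -1" by (auto simp: abs_if split: if_splits)
next
  assume "pairing p e = 1 \<or> pairing p e = -1"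
  then have a2: "pairing p e * pairing p e = 1" by auto
  show "rationally_integrable (der_frac p e :: (('n \<Rightarrow>\<^sub>0 int) \<Rightarrow>\<^sub>0 'k::field_char_0) fract \<Rightarrow> _)"
    unfolding ri_iff
  proof
    fix x :: "('n,'k) KK"
    show "ratE p e x"
      by (rule ratE_all) (use mono_rat[OF a2] in \<open>simp add: chiK_def\<close>)
  qed
qed


end
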